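(* For every bracket pattern $w$, $\langle\!\langle w\rangle\!\rangle=\{w'\mid w'\text{ bracket pattern},\ A(w')\subseteq A(w)\}$.
   Context: $\mathbb N=\{1,2,\dots\}$, $\mathbb N_0=\mathbb N\cup\{0\}$. A bracket pattern is a non-empty finite subset $w\subseteq\mathbb N$; $\|w\|:=\max(w)$. For bracket patterns $w,w'$: superposition $w\cup w'$; for $j\in w$ the projection $\cap_j w:=\{i\in w\mid i\le j\}$; the dual $w^\dagger:=\{\|w\|-i\mid i\in\mathbb N_0,\ i<\|w\|,\ i\notin w\}$. A bracket pattern category is a set of bracket patterns closed under superposition, duals and projections; $\langle\!\langle w\rangle\!\rangle$ denotes the smallest bracket pattern category containing $w$. The completion of a bracket pattern $w$ is $A(w):=\{j-i\mid j\in w,\ i\in\mathbb N_0,\ i\notin w,\ i<j\}$. *)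

theory Defs
  imports Main
begin

definition bracket_pattern :: "nat set \<Rightarrow> bool" where
  "bracket_pattern w \<longleftrightarrow> finite w \<and> w \<noteq> {} \<and> 0 \<notin> w"

definition bnorm :: "nat set \<Rightarrow> nat" where
  "bnorm w = Max w"

definition proj :: "nat \<Rightarrow> nat set \<Rightarrow> nat set" where
  "proj j w = {i \<in> w. i \<le> j}"

definition bdual :: "nat set \<Rightarrow> nat set" where
  "bdual w = {bnorm w - i | i. i < bnorm w \<and> i \<notin> w}"

definition bp_category :: "nat set set \<Rightarrow> bool" where
  "bp_category C \<longleftrightarrow>
     (\<forall>w\<in>C. bracket_pattern w) \<and>
     (\<forall>w\<in>C. \<forall>w'\<in>C. w \<union> w' \<in> C) \<and>
     (\<forall>w\<in>C. bdual w \<noteq> {} \<longrightarrow> bdual w \<in> C) \<and>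
     (\<forall>w\<in>C. \<forall>j\<in>w. proj j w \<in> C)"

definition generated_cat :: "nat set \<Rightarrow> nat set set" where
  "generated_cat w = \<Inter> {C. bp_category C \<and> w \<in> C}"

definition completion :: "nat set \<Rightarrow> nat set" where
  "completion w = {j - i | j i. j \<in> w \<and> i \<notin> w \<and> i < j}"

end

theory Submission
  imports Defs
begin

lemma bp_max_pos: "bracket_pattern v \<Longrightarrow> Max v \<in> v \<and> 0 < Max v \<and> (\<forall>x\<in>v. 0 < x \<and> x \<le> Max v)"
  unfolding bracket_pattern_def by (metis Max_ge Max_in gr0I)

lemma dual_mem:
  assumes "bracket_pattern v"
  shows "x \<in> bdual v \<longleftrightarrow> (0 < x \<and> x \<le> Max v \<and> Max v - x \<notin> v)"
proof
  assume "x \<in> bdual v"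
  then obtain i where "x = Max v - i" "i < Max v" "i \<notin> v" unfolding bdual_def bnorm_def by auto
  then show "0 < x \<and> x \<le> Max v \<and> Max v - x \<notin> v" by auto
next
  assume h: "0 < x \<and> x \<le> Max v \<and> Max v - x \<notin> v"
  then have "x = Max v - (Max v - x)" "Max v - x < Max v" by auto
  with h show "x \<in> bdual v" unfolding bdual_def bnorm_def by blast
qed

lemma dual_bp:
  assumes "bracket_pattern v"
  shows "bracket_pattern (bdual v)" "Max (bdual v) = Max v" "Max v \<in> bdual v"
proof -
  have M: "Max v \<in> v \<and> 0 < Max v \<and> (\<forall>x\<in>v. 0 < x \<and> x \<le> Max v)" using bp_max_pos[OF assms] .
  have z: "0 \<notin> v" using assms unfolding bracket_pattern_def by auto
  show m: "Max v \<in> bdual v" using M z dual_mem[OF assms] by auto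
  have sub: "bdual v \<subseteq> {..Max v}" using dual_mem[OF assms] by auto
  have fin: "finite (bdual v)" using finite_subset[OF sub] by auto
  have ne: "bdual v \<noteq> {}" using m by auto
  have z0: "0 \<notin> bdual v" using dual_mem[OF assms] by auto
  show "bracket_pattern (bdual v)" unfolding bracket_pattern_def using fin ne z0 by blast
  show "Max (bdual v) = Max v"
    by (metis m fin sub Max_ge Max_in atMost_iff empty_iff le_antisym subsetD)
qed

lemma dual_dual:
  assumes "bracket_pattern v"
  shows "bdual (bdual v) = v"
proof -
  have M: "Max v \<in> v \<and> 0 < Max v \<and> (\<forall>x\<in>v. 0 < x \<and> x \<le> Max v)" using bp_max_pos[OF assms] .
  show ?thesis
  proof (rule set_eqI)
    fix x
    have "x \<in> bdual (bdual v) \<longleftrightarrow> (0 < x \<and> x \<le> Max v \<and> Max v - x \<notin> bdual v)"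
      using dual_mem[OF dual_bp(1)[OF assms]] dual_bp(2)[OF assms] by simp
    also have "\<dots> \<longleftrightarrow> x \<in> v"
      using dual_mem[OF assms, of "Max v - x"] M
      by (cases "x = Max v") (auto simp: diff_diff_cancel)
    finally show "x \<in> bdual (bdual v) \<longleftrightarrow> x \<in> v" .
  qed
qed

lemma mem_completion: "x \<in> completion v \<longleftrightarrow> (\<exists>j i. j \<in> v \<and> i \<notin> v \<and> i < j \<and> x = j - i)"
  unfolding completion_def by auto

lemma completion_dual:
  assumes "bracket_pattern v"
  shows "completion (bdual v) \<subseteq> completion v"
proof
  fix x assume "x \<in> completion (bdual v)"
  then obtain j i where ji: "j \<in> bdual v" "i \<notin> bdual v" "i < j" "x = j - i"
    unfolding mem_completion by blast
  have M: "Max v \<in> v \<and> 0 < Max v \<and> (\<forall>x\<in>v. 0 < x \<and> x \<le> Max v)" using bp_max_pos[OF assms] .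
  have j: "0 < j" "j \<le> Max v" "Max v - j \<notin> v" using ji(1) dual_mem[OF assms] by auto
  show "x \<in> completion v"
  proof (cases "i = 0")
    case True
    then show ?thesis unfolding mem_completion using M j ji
      by (intro exI[of _ "Max v"] exI[of _ "Max v - j"]) auto
  next
    case False
    then have "Max v - i \<in> v" using ji(2,3) j dual_mem[OF assms, of i] by auto
    then show ?thesis unfolding mem_completion using j ji
      by (intro exI[of _ "Max v - i"] exI[of _ "Max v - j"]) auto
  qed
qed

lemma completion_proj: "completion (proj j v) \<subseteq> completion v"
  unfolding mem_completion proj_def subset_iff by force

lemma completion_un: "completion (v \<union> v') \<subseteq> completion v \<union> completion v'"
  unfolding completion_def by blast

lemma proj_bp:
  assumes "bracket_pattern v" "j \<in> v"
  shows "bracket_pattern (proj j v)" "Max (proj j v) = j"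
proof -
  have f: "finite (proj j v)" using assms unfolding bracket_pattern_def proj_def by auto
  have jm: "j \<in> proj j v" using assms unfolding proj_def by auto
  show "bracket_pattern (proj j v)" using assms f jm unfolding bracket_pattern_def proj_def by auto
  show "Max (proj j v) = j" using f jm
    by (metis (no_types, lifting) Max_eqI mem_Collect_eq proj_def)
qed

lemma un_bp: "bracket_pattern v \<Longrightarrow> bracket_pattern v' \<Longrightarrow> bracket_pattern (v \<union> v')"
  unfolding bracket_pattern_def by auto

definition S where "S w = {w'. bracket_pattern w' \<and> completion w' \<subseteq> completion w}"

lemma S_cat: "bracket_pattern w \<Longrightarrow> bp_category (S w)"
proof -
  assume bw: "bracket_pattern w"
  have 1: "\<forall>v\<in>S w. \<forall>v'\<in>S w. v \<union> v' \<in> S w"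
  proof (intro ballI)
    fix v v' assume "v \<in> S w" "v' \<in> S w"
    then show "v \<union> v' \<in> S w" unfolding S_def using un_bp completion_un[of v v'] by auto
  qed
  have 2: "\<forall>v\<in>S w. bdual v \<noteq> {} \<longrightarrow> bdual v \<in> S w"
  proof (intro ballI impI)
    fix v assume "v \<in> S w"
    then show "bdual v \<in> S w" unfolding S_def using dual_bp(1)[of v] completion_dual[of v] by auto
  qed
  have 3: "\<forall>v\<in>S w. \<forall>j\<in>v. proj j v \<in> S w"
  proof (intro ballI)
    fix v j assume "v \<in> S w" "j \<in> v"
    then show "proj j v \<in> S w" unfolding S_def using proj_bp(1)[of v j] completion_proj[of j v] by auto
  qed
  show ?thesis unfolding bp_category_def using 1 2 3 unfolding S_def by auto
qed

lemma main:
  assumes C: "bp_category C" and wC: "w \<in> C" and bw: "bracket_pattern w"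
  shows "\<forall>y. bracket_pattern y \<and> completion y \<subseteq> completion w \<and> Max y = m \<longrightarrow> y \<in> C"
proof (induction m rule: less_induct)
  case (less m)
  have Cbp: "\<And>v. v \<in> C \<Longrightarrow> bracket_pattern v" using C unfolding bp_category_def by blast
  have Cun: "\<And>v v'. v \<in> C \<Longrightarrow> v' \<in> C \<Longrightarrow> v \<union> v' \<in> C" using C unfolding bp_category_def by blast
  have Cdual: "bdual v \<in> C" if "v \<in> C" for v
  proof -
    have "bdual v \<noteq> {}" using dual_bp(3)[OF Cbp[OF that]] by blast
    then show ?thesis using C that unfolding bp_category_def by blast
  qed
  have Cproj: "\<And>v j. v \<in> C \<Longrightarrow> j \<in> v \<Longrightarrow> proj j v \<in> C" using C unfolding bp_category_def by blast
  have low: "\<exists>v. (v = {} \<or> v \<in> C) \<and> v \<subseteq> y \<and> (\<forall>x\<in>y. x < Max y \<longrightarrow> x \<in> v)"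
    if y: "bracket_pattern y" "completion y \<subseteq> completion w" "Max y = m" for y
  proof (cases "\<exists>x\<in>y. x < Max y")
    case False then show ?thesis by (intro exI[of _ "{}"]) auto
  next
    case True
    define y' where "y' = {x\<in>y. x < Max y}"
    have fy: "finite y'" using y unfolding y'_def bracket_pattern_def by auto
    have ne: "y' \<noteq> {}" using True unfolding y'_def by auto
    define k where "k = Max y'"
    have ky: "k \<in> y" "k < Max y" using Max_in[OF fy ne] unfolding k_def y'_def by auto
    have pe: "proj k y = y'"
    proof (rule set_eqI)
      fix x
      have "x \<in> y' \<Longrightarrow> x \<le> k" unfolding k_def using Max_ge[OF fy] by blast
      moreover have "x \<le> k \<Longrightarrow> x < Max y" using ky by linarith
      ultimately show "x \<in> proj k y \<longleftrightarrow> x \<in> y'" unfolding proj_def y'_def by blast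
    qed
    have "proj k y \<in> C" using less[rule_format, of k "proj k y"] proj_bp[OF y(1) ky(1)]
        completion_proj[of k y] y ky by auto
    then show ?thesis using pe unfolding y'_def by auto
  qed
  show ?case
  proof (intro allI impI)
    fix y assume yh: "bracket_pattern y \<and> completion y \<subseteq> completion w \<and> Max y = m"
    then have y: "bracket_pattern y" "completion y \<subseteq> completion w" "Max y = m" by auto
    have My: "Max y \<in> y \<and> 0 < Max y \<and> (\<forall>x\<in>y. 0 < x \<and> x \<le> Max y)" using bp_max_pos[OF y(1)] .
    have "m \<in> completion y" unfolding mem_completion using My y(1) y(3)
      unfolding bracket_pattern_def by (intro exI[of _ m] exI[of _ 0]) auto
    then have "m \<in> completion w" using y(2) by blast
    then obtain j i where ji: "j \<in> w" "i \<notin> w" "i < j" "m = j - i"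
      unfolding mem_completion by blast
    have pj: "proj j w \<in> C" using Cproj[OF wC ji(1)] .
    have bpj: "bracket_pattern (proj j w)" "Max (proj j w) = j" using proj_bp[OF bw ji(1)] by auto
    have "m \<in> bdual (proj j w)" using dual_mem[OF bpj(1)] bpj(2) ji unfolding proj_def by auto
    then have RC: "proj m (bdual (proj j w)) \<in> C" using Cproj Cdual pj by blast
    have Rbp: "Max (proj m (bdual (proj j w))) = m"
      using proj_bp[OF dual_bp(1)[OF bpj(1)] \<open>m \<in> bdual (proj j w)\<close>] by auto
    define R where "R = proj m (bdual (proj j w))"
    have R: "R \<in> C" "Max R = m" "bracket_pattern R" using RC Rbp Cbp unfolding R_def by auto
    define z where "z = bdual y"
    have z: "bracket_pattern z" "Max z = m" "completion z \<subseteq> completion w"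
      using dual_bp[OF y(1)] completion_dual[OF y(1)] y unfolding z_def by auto
    obtain v where v: "v = {} \<or> v \<in> C" "v \<subseteq> z" "\<forall>x\<in>z. x < Max z \<longrightarrow> x \<in> v" using low[OF z(1) z(3) z(2)] by blast
    define Q where "Q = v \<union> R"
    have Q: "Q \<in> C" using Cun[OF _ R(1)] v(1) R(1) unfolding Q_def by auto
    then have Q2: "bracket_pattern Q" using Cbp by auto
    have MR: "Max R \<in> R \<and> 0 < Max R \<and> (\<forall>x\<in>R. 0 < x \<and> x \<le> Max R)" using bp_max_pos[OF R(3)] .
    have Mz: "Max z \<in> z \<and> 0 < Max z \<and> (\<forall>x\<in>z. 0 < x \<and> x \<le> Max z)" using bp_max_pos[OF z(1)] .
    have QM: "Max Q = m"
    proof -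
      have "\<forall>x\<in>Q. x \<le> m" using MR Mz v(2) R z unfolding Q_def by auto
      moreover have "m \<in> Q" using MR R unfolding Q_def by auto
      ultimately show ?thesis using Q2 unfolding bracket_pattern_def by (meson Max_eqI)
    qed
    have zQ: "z \<subseteq> Q"
    proof
      fix x assume "x \<in> z"
      then show "x \<in> Q" using v(3) Mz MR R z unfolding Q_def
        by (cases "x < Max z") auto
    qed
    define P where "P = bdual Q"
    have P: "P \<in> C" using Cdual[OF Q(1)] unfolding P_def .
    have Py: "P \<subseteq> y"
    proof
      fix x assume "x \<in> P"
      then have "0 < x \<and> x \<le> m \<and> m - x \<notin> Q" using dual_mem[OF Q2] QM unfolding P_def by auto
      then have "0 < x \<and> x \<le> Max z \<and> Max z - x \<notin> z" using zQ z by auto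
      then have "x \<in> bdual z" using dual_mem[OF z(1)] by auto
      then show "x \<in> y" using dual_dual[OF y(1)] unfolding z_def by simp
    qed
    have mP: "m \<in> P" using dual_bp(3)[OF Q2] QM unfolding P_def by simp
    obtain u where u: "u = {} \<or> u \<in> C" "u \<subseteq> y" "\<forall>x\<in>y. x < Max y \<longrightarrow> x \<in> u" using low[OF y] by blast
    have "y = u \<union> P"
    proof
      show "y \<subseteq> u \<union> P"
      proof
        fix x assume "x \<in> y"
        then show "x \<in> u \<union> P" using u(3) mP My y(3) by (cases "x < Max y") auto
      qed
      show "u \<union> P \<subseteq> y" using u(2) Py by auto
    qed
    then show "y \<in> C" using Cun[OF _ P] u(1) P by auto
  qed
qed

theorem lemma7p9:
  assumes "bracket_pattern w"
  shows "generated_cat w = {w'. bracket_pattern w' \<and> completion w' \<subseteq> completion w}"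
proof
  show "generated_cat w \<subseteq> {w'. bracket_pattern w' \<and> completion w' \<subseteq> completion w}"
    unfolding generated_cat_def using S_cat[OF assms] assms unfolding S_def by blast
  show "{w'. bracket_pattern w' \<and> completion w' \<subseteq> completion w} \<subseteq> generated_cat w"
    unfolding generated_cat_def using main assms by blast
qed

end
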